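(* Let $(\Theta,\Sigma_\Theta)$ and $(\mathcal Y,\Sigma_{\mathcal Y})$ be Borel spaces, let $\pi$ be a prior probability measure on $\Theta$, and let $\{P_\theta\}_{\theta\in\Theta}$ be probability measures on $\mathcal Y$ (a Markov kernel). Let $X\sim\pi$ be the hidden parameter and $Y$ an observation with $Y\mid X=\theta \sim P_\theta$. Let $\beta:\Theta\to\mathbb R$ be the parameter of interest and $\check\beta:\mathcal Y\to\mathbb R$ any (measurable) estimator. Let $D:\mathbb R_+\to\mathbb R_+$, $\mathbb R_+=[0,\infty)$, satisfy $D(x)\ge D(y)$ whenever $x\ge y$, $D(0)=0$, and $D$ differentiable with derivative $\dot D$. Define the Bayesian error $$\mathsf E \equiv \mathbb E\{D[|\check\beta(Y)-\beta(X)|]\}.$$ For each $t\in\mathbb R_+$, let $\Phi_t,\Phi_t'\in\Sigma_\Theta$, let $\Sigma_t\equiv\{S\cap\Phi_t: S\in\Sigma_\Theta\}$ and $\Sigma_t'\equiv\{S\cap\Phi_t': S\in\Sigma_\Theta\}$ be the restricted $\sigma$-algebras, and let $T_t:\Phi_t\to\Phi_t'$ be a $\Sigma_t/\Sigma_t'$-measurable map such that there exists a measure $\pi_t$ on $(\Phi_t,\Sigma_t)$ satisfying $$\pi = \pi_t T_t^{-1}\quad\text{on }(\Phi_t',\Sigma_t'),$$ and $$\beta(T_t(\theta))\ge \beta(\theta)+t\quad\text{for }\pi_t\text{-almost every }\theta\in\Phi_t.$$ Assume further that both $\pi$ and $\pi_t$ are dominated by a reference measure $\mu$ on $(\Phi_t,\Sigma_t)$,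 with densities $f\equiv d\pi/d\mu$ and $f_t\equiv d\pi_t/d\mu$. Then $$\mathsf E\ge \mathsf Z_1\equiv \frac12\int_0^\infty dt\,\dot D\!\left(\frac t2\right)\mathcal V g_1(t),\qquad g_1(t)\equiv\int_{\Phi_t} d\mu(\theta)\,[f(\theta)+f_t(\theta)]\,\Pi\!\left(\theta,T_t(\theta),\frac{f(\theta)}{f(\theta)+f_t(\theta)}\right),$$ and also $$\mathsf E\ge \mathsf Z_2\equiv \frac12\int_0^\infty dt\,\dot D\!\left(\frac t2\right)\mathcal V g_2(t),\qquad g_2(t)\equiv 2\int_{\Phi_t} d\mu(\theta)\,\min\{f(\theta),f_t(\theta)\}\,\Pi\!\left(\theta,T_t(\theta),0.5\right).$$
   Context: For $\theta,\phi\in\Theta$ and $q\in[0,1]$, $\Pi(\theta,\phi,q)$ denotes the minimum error probability (minimized over all decision rules based on $Y$) for the binary hypothesis-testing problem with hypotheses $\mathcal H_0: Y\sim P_\theta$ and $\mathcal H_1: Y\sim P_\phi$, where $\mathcal H_0$ has prior probability $q$ and $\mathcal H_1$ has prior probability $1-q$. The valley-filling operator $\mathcal V$ acts on a function $g$ on $\mathbb R_+$ by $\mathcal V g(t)\equiv\sup_{t'\ge t} g(t')$. The measure $\pi_t$ need not be a probability measure. $\pi_tT_t^{-1}$ denotes the pushforward of $\pi_t$ under $T_t$. *)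

theory Defs
  imports "HOL-Probability.Probability"
begin

text \<open>Borel space (standard Borel space): measurably isomorphic to a Borel subset of
  the reals (by Kuratowski's theorem equivalent to being isomorphic to a Borel subset
  of a Polish space).\<close>
definition borel_space :: "'a measure \<Rightarrow> bool" where
  "borel_space M \<longleftrightarrow>
     (\<exists>S \<in> sets (borel :: real measure). \<exists>f g.
        f \<in> measurable M (restrict_space borel S) \<and>
        g \<in> measurable (restrict_space borel S) M \<and>
        (\<forall>x\<in>space M. g (f x) = x) \<and> (\<forall>y\<in>S. f (g y) = y))"

text \<open>Minimum error probability of the binary test H0: Y ~ P th (prior q) vs
  H1: Y ~ P ph (prior 1 - q), minimised over all (deterministic) decision rules,
  i.e. measurable acceptance regions A for H1.\<close>
definition min_err_prob ::
  "'b measure \<Rightarrow> ('a \<Rightarrow> 'b measure) \<Rightarrow> 'a \<Rightarrow> 'a \<Rightarrow> real \<Rightarrow> real" where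
  "min_err_prob N P th ph q =
     (INF A \<in> sets N. q * measure (P th) A + (1 - q) * measure (P ph) (space N - A))"

definition valley_fill :: "(real \<Rightarrow> ennreal) \<Rightarrow> real \<Rightarrow> ennreal" where
  "valley_fill g t = (SUP t' \<in> {t..}. g t')"

end

theory Submission imports Defs begin


lemma D_seq:
  fixes D D' :: "real \<Rightarrow> real"
  assumes D_deriv: "(D has_real_derivative D' x) (at x within {0..})" and x: "x \<ge> 0"
  shows "(\<lambda>i. (D (x + 1 / Suc i) - D x) * Suc i) \<longlonglongrightarrow> D' x"
proof -
  have lim: "((\<lambda>y. (D y - D x) / (y - x)) \<longlongrightarrow> D' x) (at x within {0..})"
    using D_deriv has_field_derivative_iff by blast
  have s: "filterlim (\<lambda>i::nat. x + 1 / Suc i) (at x within {0..}) sequentially"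
  proof (subst filterlim_at, intro conjI)
    show "\<forall>\<^sub>F i in sequentially. x + 1 / real (Suc i) \<in> {0..} \<and> x + 1 / real (Suc i) \<noteq> x"
      using x by (auto intro!: always_eventually simp: add_nonneg_nonneg)
    have "(\<lambda>i::nat. x + 1 / real (Suc i)) \<longlonglongrightarrow> x + 0"
      by (intro tendsto_intros LIMSEQ_inverse_real_of_nat[unfolded inverse_eq_divide] )
    then show "(\<lambda>i::nat. x + 1 / real (Suc i)) \<longlonglongrightarrow> x" by simp
  qed
  have "(\<lambda>i. (D (x + 1 / Suc i) - D x) / ((x + 1 / Suc i) - x)) \<longlonglongrightarrow> D' x"
    using filterlim_compose[OF lim s] by simp
  then show ?thesis by simp
qed

lemma D'_nonneg:
  fixes D D' :: "real \<Rightarrow> real"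
  assumes D_deriv: "(D has_real_derivative D' x) (at x within {0..})" and x: "x \<ge> 0"
    and D_mono: "\<And>x y. 0 \<le> y \<Longrightarrow> y \<le> x \<Longrightarrow> D y \<le> D x"
  shows "D' x \<ge> 0"
proof (rule LIMSEQ_le_const[OF D_seq[of D D' x, OF D_deriv x]], intro exI allI impI)
  fix i :: nat
  have "D x \<le> D (x + 1 / Suc i)" using x by (intro D_mono) auto
  then show "0 \<le> (D (x + 1 / Suc i) - D x) * Suc i" by simp
qed

lemma Dp_meas:
  fixes D D' :: "real \<Rightarrow> real"
  assumes D_deriv: "\<And>x. x \<ge> 0 \<Longrightarrow> (D has_real_derivative D' x) (at x within {0..})"
  shows "(\<lambda>x. if 0 \<le> x then D' x else 0) \<in> borel_measurable borel"
proof -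
  have "continuous_on {0..} D"
    using D_deriv DERIV_continuous continuous_on_eq_continuous_within by fastforce
  then have c: "continuous_on UNIV (\<lambda>x. D \<bar>x\<bar>)"
    by (rule continuous_on_compose2) (auto intro: continuous_intros)
  then have m: "(\<lambda>x. D \<bar>x\<bar>) \<in> borel_measurable borel"
    by (rule borel_measurable_continuous_onI)
  show ?thesis
  proof (rule borel_measurable_LIMSEQ_real)
    fix x :: real assume "x \<in> space borel"
    show "(\<lambda>i. if 0 \<le> x then (D (abs (x + 1 / Suc i)) - D (abs x)) * Suc i else 0) \<longlonglongrightarrow> (if 0 \<le> x then D' x else 0)"
    proof (cases "0 \<le> x")
      case True
      have "\<bar>x + 1 / Suc i\<bar> = x + 1 / Suc i" for i::nat using True by (auto simp: add_nonneg_nonneg)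
      then show ?thesis using True D_seq[of D D' x, OF D_deriv[OF True] True] by simp
    qed simp
  next
    fix i :: nat
    show "(\<lambda>x. if 0 \<le> x then (D (abs (x + 1 / Suc i)) - D (abs x)) * Suc i else 0) \<in> borel_measurable borel"
      using m by measurable
  qed
qed

lemma D_ftc:
  fixes D D' :: "real \<Rightarrow> real"
  assumes D_deriv: "\<And>x. x \<ge> 0 \<Longrightarrow> (D has_real_derivative D' x) (at x within {0..})"
    and D_mono: "\<And>x y. 0 \<le> y \<Longrightarrow> y \<le> x \<Longrightarrow> D y \<le> D x"
    and x: "x \<ge> 0"
  shows "(\<integral>\<^sup>+t. ennreal (D' (t/2)) * indicator {0..2*x} t \<partial>lborel) = ennreal (2 * D x - 2 * D 0)"
proof (rule nn_integral_has_integral_lebesgue')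
  show "0 \<le> D' (t / 2)" if "t \<in> {0..2 * x}" for t
    using D'_nonneg[of D D' "t/2"] D_deriv D_mono that by auto
  have "((\<lambda>t. D' (t/2)) has_integral ((\<lambda>t. 2 * D (t/2)) (2*x) - (\<lambda>t. 2 * D (t/2)) 0)) {0..2*x}"
  proof (rule fundamental_theorem_of_calculus)
    fix t assume t: "t \<in> {0..2*x}"
    have d1: "(D has_real_derivative D' (t/2)) (at ((\<lambda>t. t/2) t) within (\<lambda>t. t/2) ` {0..2*x})"
      by (rule has_field_derivative_subset[OF D_deriv]) (use t in auto)
    have d2: "((\<lambda>t::real. t/2) has_real_derivative 1/2) (at t within {0..2*x})"
      by (auto intro!: derivative_eq_intros)
    have "((\<lambda>t. 2 * D (t/2)) has_real_derivative 2 * (D' (t/2) * (1/2))) (at t within {0..2*x})"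
      using DERIV_cmult[OF DERIV_image_chain[OF d1 d2], of 2] by (simp add: o_def)
    then show "((\<lambda>t. 2 * D (t/2)) has_vector_derivative D' (t/2)) (at t within {0..2*x})"
      by (simp add: has_real_derivative_iff_has_vector_derivative)
  qed (use x in auto)
  then show "((\<lambda>t. D' (t / 2)) has_integral 2 * D x - 2 * D 0) {0..2 * x}" by simp
qed


lemma Dabs_meas:
  fixes D D' :: "real \<Rightarrow> real"
  assumes D_deriv: "\<And>x. x \<ge> 0 \<Longrightarrow> (D has_real_derivative D' x) (at x within {0..})"
  shows "(\<lambda>x. D \<bar>x\<bar>) \<in> borel_measurable borel"
proof -
  have "continuous_on {0..} D"
    using D_deriv DERIV_continuous continuous_on_eq_continuous_within by fastforce
  then have c: "continuous_on UNIV (\<lambda>x. D \<bar>x\<bar>)"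
    by (rule continuous_on_compose2) (auto intro: continuous_intros)
  then show ?thesis
    by (rule borel_measurable_continuous_onI)
qed

lemma kernel_pred_meas:
  assumes K: "K \<in> measurable M (subprob_algebra N)"
    and Q: "Measurable.pred (M \<Otimes>\<^sub>M N) (\<lambda>p. Q (fst p) (snd p))"
  shows "(\<lambda>x. emeasure (K x) {y \<in> space N. Q x y}) \<in> borel_measurable M"
proof -
  define S where "S = {p \<in> space (M \<Otimes>\<^sub>M N). Q (fst p) (snd p)}"
  have S: "S \<in> sets (M \<Otimes>\<^sub>M N)" using Q unfolding S_def pred_def by simp
  have "(\<lambda>x. \<integral>\<^sup>+y. indicator S (x, y) \<partial>K x) \<in> borel_measurable M"
    by (rule nn_integral_measurable_subprob_algebra2[OF _ K]) (use S in \<open>simp add: case_prod_beta'\<close>)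
  then show ?thesis
  proof (rule measurable_cong[THEN iffD1, rotated])
    fix x assume x: "x \<in> space M"
    have sK: "space (K x) = space N" "sets (K x) = sets N"
      using subprob_measurableD(1,2)[OF K x] by auto
    have "{y \<in> space N. Q x y} = Pair x -` S \<inter> space N" using x by (auto simp: S_def space_pair_measure)
    moreover have "Pair x -` S \<inter> space N \<in> sets N" using S by (intro sets.Int sets_Pair1) auto
    ultimately have Sx: "{y \<in> space N. Q x y} \<in> sets (K x)" using sK by simp
    have "(\<integral>\<^sup>+y. indicator S (x, y) \<partial>K x) = (\<integral>\<^sup>+y. indicator {y \<in> space N. Q x y} y \<partial>K x)"
      by (rule nn_integral_cong) (use x sK in \<open>auto simp: S_def space_pair_measure indicator_def\<close>)
    also have "\<dots> = emeasure (K x) {y \<in> space N. Q x y}" using Sx by simp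
    finally show "(\<integral>\<^sup>+y. indicator S (x, y) \<partial>K x) = emeasure (K x) {y \<in> space N. Q x y}" .
  qed
qed



lemma stepC:
  fixes pi :: "'a measure" and N :: "'b measure" and P :: "'a \<Rightarrow> 'b measure"
    and beta :: "'a \<Rightarrow> real" and betac :: "'b \<Rightarrow> real" and D D' :: "real \<Rightarrow> real"
  assumes prior: "prob_space pi"
    and kernel: "P \<in> measurable pi (subprob_algebra N)"
    and kernel_prob: "\<And>th. th \<in> space pi \<Longrightarrow> prob_space (P th)"
    and beta_meas[measurable]: "beta \<in> borel_measurable pi"
    and betac_meas[measurable]: "betac \<in> borel_measurable N"
    and D_mono: "\<And>x y. 0 \<le> y \<Longrightarrow> y \<le> x \<Longrightarrow> D y \<le> D x"
    and D_0: "D 0 = 0"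
    and D_deriv: "\<And>x. x \<ge> 0 \<Longrightarrow> (D has_real_derivative D' x) (at x within {0..})"
  shows "(1/2) * (\<integral>\<^sup>+t\<in>{0..}. ennreal (D' (t/2)) *
      (\<integral>\<^sup>+th. emeasure (P th) {y \<in> space N. t/2 \<le> \<bar>betac y - beta th\<bar>} \<partial>pi) \<partial>lborel)
    \<le> (\<integral>\<^sup>+ th. (\<integral>\<^sup>+ y. ennreal (D \<bar>betac y - beta th\<bar>) \<partial>P th) \<partial>pi)"
proof -
  define Dp where "Dp = (\<lambda>x. if 0 \<le> x then D' x else 0)"
  have Dp_m[measurable]: "Dp \<in> borel_measurable borel"
    unfolding Dp_def by (rule Dp_meas[OF D_deriv])
  have Dabs_m[measurable]: "(\<lambda>x. D \<bar>x\<bar>) \<in> borel_measurable borel"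
    by (rule Dabs_meas[OF D_deriv])
  define H where "H t = ennreal (Dp (t/2)) * indicator {0..} t" for t :: real
  have H_m[measurable]: "H \<in> borel_measurable lborel"
    unfolding H_def by measurable
  define G where "G t th = emeasure (P th) {y \<in> space N. t/2 \<le> \<bar>betac y - beta th\<bar>}" for t th
  have Pk: "(\<lambda>p. P (snd p)) \<in> measurable (lborel \<Otimes>\<^sub>M pi) (subprob_algebra N)"
    using kernel by measurable
  have G_m: "(\<lambda>p. G (fst p) (snd p)) \<in> borel_measurable (lborel \<Otimes>\<^sub>M pi)"
    unfolding G_def
    by (rule kernel_pred_meas[OF Pk, of "\<lambda>p y. fst p / 2 \<le> \<bar>betac y - beta (snd p)\<bar>"]) measurable
  have G_m2: "(\<lambda>th. G t th) \<in> borel_measurable pi" for t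
    using measurable_Pair2[OF G_m, of t] by simp
  interpret pi: prob_space pi by (rule prior)
  interpret pair_sigma_finite lborel pi
    unfolding pair_sigma_finite_def using pi.sigma_finite_measure_axioms lborel.sigma_finite_measure_axioms by simp
  have "(\<integral>\<^sup>+t\<in>{0..}. ennreal (D' (t/2)) * (\<integral>\<^sup>+th. G t th \<partial>pi) \<partial>lborel)
      = (\<integral>\<^sup>+t. H t * (\<integral>\<^sup>+th. G t th \<partial>pi) \<partial>lborel)"
    by (rule nn_integral_cong) (auto simp: H_def Dp_def indicator_def)
  also have "\<dots> = (\<integral>\<^sup>+t. (\<integral>\<^sup>+th. H t * G t th \<partial>pi) \<partial>lborel)"
    by (rule nn_integral_cong) (rule nn_integral_cmult[symmetric, OF G_m2])
  also have "\<dots> = (\<integral>\<^sup>+th. (\<integral>\<^sup>+t. H t * G t th \<partial>lborel) \<partial>pi)"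
    by (rule Fubini'[symmetric]) (use G_m in \<open>simp add: case_prod_beta'\<close>)
  also have "\<dots> = (\<integral>\<^sup>+th. 2 * (\<integral>\<^sup>+ y. ennreal (D \<bar>betac y - beta th\<bar>) \<partial>P th) \<partial>pi)"
  proof (rule nn_integral_cong)
    fix th assume th: "th \<in> space pi"
    have sK: "space (P th) = space N" "sets (P th) = sets N"
      using subprob_measurableD(1,2)[OF kernel th] by auto
    interpret Pth: prob_space "P th" by (rule kernel_prob[OF th])
    interpret pair_sigma_finite lborel "P th"
      unfolding pair_sigma_finite_def using Pth.sigma_finite_measure_axioms lborel.sigma_finite_measure_axioms by simp
    have Dm: "(\<lambda>y. ennreal (D \<bar>betac y - beta th\<bar>)) \<in> borel_measurable (P th)"
      using th by (subst measurable_cong_sets[OF sK(2) refl]) measurable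
    have I_m: "(\<lambda>(t, y). H t * indicator {y \<in> space N. t/2 \<le> \<bar>betac y - beta th\<bar>} y) \<in> borel_measurable (lborel \<Otimes>\<^sub>M P th)"
      using th by (subst measurable_cong_sets[OF sets_pair_measure_cong[OF refl sK(2)] refl]) measurable
    have "(\<integral>\<^sup>+t. H t * G t th \<partial>lborel) = (\<integral>\<^sup>+t. (\<integral>\<^sup>+y. H t * indicator {y \<in> space N. t/2 \<le> \<bar>betac y - beta th\<bar>} y \<partial>P th) \<partial>lborel)"
    proof (rule nn_integral_cong)
      fix t :: real
      have "{y \<in> space N. t/2 \<le> \<bar>betac y - beta th\<bar>} \<in> sets (P th)"
        unfolding sK using th by measurable
      then show "H t * G t th = (\<integral>\<^sup>+y. H t * indicator {y \<in> space N. t/2 \<le> \<bar>betac y - beta th\<bar>} y \<partial>P th)"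
        unfolding G_def by (simp add: nn_integral_cmult_indicator)
    qed
    also have "\<dots> = (\<integral>\<^sup>+y. (\<integral>\<^sup>+t. H t * indicator {y \<in> space N. t/2 \<le> \<bar>betac y - beta th\<bar>} y \<partial>lborel) \<partial>P th)"
      by (rule Fubini'[symmetric]) (rule I_m)
    also have "\<dots> = (\<integral>\<^sup>+y. 2 * ennreal (D \<bar>betac y - beta th\<bar>) \<partial>P th)"
    proof (rule nn_integral_cong)
      fix y assume y: "y \<in> space (P th)"
      define r where "r = \<bar>betac y - beta th\<bar>"
      have r: "r \<ge> 0" by (simp add: r_def)
      have "(\<integral>\<^sup>+t. H t * indicator {y \<in> space N. t/2 \<le> \<bar>betac y - beta th\<bar>} y \<partial>lborel)
          = (\<integral>\<^sup>+t. ennreal (D' (t/2)) * indicator {0..2*r} t \<partial>lborel)"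
        by (rule nn_integral_cong) (use y sK in \<open>auto simp: H_def Dp_def indicator_def r_def\<close>)
      also have "\<dots> = ennreal (2 * D r - 2 * D 0)"
        by (rule D_ftc[OF D_deriv D_mono r])
      also have "\<dots> = 2 * ennreal (D r)"
        using D_0 by (simp add: ennreal_mult')
      finally show "(\<integral>\<^sup>+t. H t * indicator {y \<in> space N. t/2 \<le> \<bar>betac y - beta th\<bar>} y \<partial>lborel)
          = 2 * ennreal (D \<bar>betac y - beta th\<bar>)" by (simp add: r_def)
    qed
    also have "\<dots> = 2 * (\<integral>\<^sup>+ y. ennreal (D \<bar>betac y - beta th\<bar>) \<partial>P th)"
      by (rule nn_integral_cmult[OF Dm])
    finally show "(\<integral>\<^sup>+t. H t * G t th \<partial>lborel) = 2 * (\<integral>\<^sup>+ y. ennreal (D \<bar>betac y - beta th\<bar>) \<partial>P th)" .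
  qed
  also have "\<dots> = 2 * (\<integral>\<^sup>+th. (\<integral>\<^sup>+ y. ennreal (D \<bar>betac y - beta th\<bar>) \<partial>P th) \<partial>pi)"
  proof (rule nn_integral_cmult)
    show "(\<lambda>th. \<integral>\<^sup>+ y. ennreal (D \<bar>betac y - beta th\<bar>) \<partial>P th) \<in> borel_measurable pi"
      by (rule nn_integral_measurable_subprob_algebra2[OF _ kernel]) measurable
  qed
  finally have eq: "(\<integral>\<^sup>+t\<in>{0..}. ennreal (D' (t/2)) * (\<integral>\<^sup>+th. G t th \<partial>pi) \<partial>lborel)
     = 2 * (\<integral>\<^sup>+th. (\<integral>\<^sup>+ y. ennreal (D \<bar>betac y - beta th\<bar>) \<partial>P th) \<partial>pi)" .
  have half: "(1/2) * (2 * x) = (x::ennreal)" for x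
    by (simp add: mult.assoc[symmetric] ennreal_divide_times)
  show ?thesis unfolding G_def[symmetric] eq half by simp
qed

lemma half2: "2 * ((1/2) * x) = (x::ennreal)"
proof -
  have h: "(1/2::ennreal) * 2 = 1" by (simp add: ennreal_divide_times)
  have "2 * ((1/2) * x) = ((1/2) * 2) * (x::ennreal)" by (simp only: ac_simps)
  then show ?thesis using h by simp
qed


lemma min_err_le:
  assumes "A \<in> sets N" "0 \<le> q" "q \<le> 1"
  shows "min_err_prob N P th ph q \<le> q * measure (P th) A + (1 - q) * measure (P ph) (space N - A)"
  unfolding min_err_prob_def
proof (rule cINF_lower[OF _ assms(1)])
  show "bdd_below ((\<lambda>A. q * measure (P th) A + (1 - q) * measure (P ph) (space N - A)) ` sets N)"
    using assms(2,3) by (intro bdd_belowI[of _ 0]) auto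
qed

lemma pw1:
  fixes f ft ma mb mb' m :: real
  assumes "0 \<le> f" "0 \<le> ft" "m \<le> q * ma + (1 - q) * mb'" "q = f / (f + ft)"
    "ft = 0 \<or> mb' \<le> mb" "0 \<le> ma" "0 \<le> mb'"
  shows "(f + ft) * m \<le> f * ma + ft * mb"
proof (cases "f + ft = 0")
  case True
  then show ?thesis using assms by (simp add: add_nonneg_eq_0_iff)
next
  case False
  then have pos: "f + ft > 0" using assms by linarith
  have "(f + ft) * m \<le> (f + ft) * (q * ma + (1 - q) * mb')"
    using pos assms(3) by (intro mult_left_mono) auto
  also have "\<dots> = f * ma + ft * mb'"
    using pos assms(4) by (simp add: field_simps)
  also have "\<dots> \<le> f * ma + ft * mb"
    using assms(2,5) by (auto intro: mult_left_mono)
  finally show ?thesis .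
qed

lemma pw2:
  fixes f ft ma mb mb' m :: real
  assumes "0 \<le> f" "0 \<le> ft" "m \<le> 1/2 * ma + (1 - 1/2) * mb'"
    "ft = 0 \<or> mb' \<le> mb" "0 \<le> ma" "0 \<le> mb'"
  shows "min f ft * m \<le> 1/2 * (f * ma + ft * mb)"
proof -
  have "min f ft * m \<le> min f ft * (1/2 * ma + (1 - 1/2) * mb')"
    using assms by (intro mult_left_mono) auto
  also have "\<dots> = 1/2 * (min f ft * ma + min f ft * mb')" by (simp add: field_simps)
  also have "\<dots> \<le> 1/2 * (f * ma + ft * mb)"
  proof -
    have "min f ft * ma \<le> f * ma" using assms by (intro mult_right_mono) auto
    moreover have "min f ft * mb' \<le> ft * mb"
    proof (cases "ft = 0")
      case True then show ?thesis using assms by simp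
    next
      case False
      then have "mb' \<le> mb" using assms by auto
      then show ?thesis using assms by (intro mult_mono) auto
    qed
    ultimately show ?thesis by simp
  qed
  finally show ?thesis .
qed


theorem theorem1:
  fixes pi :: "'a measure" and N :: "'b measure"
    and P :: "'a \<Rightarrow> 'b measure"
    and beta :: "'a \<Rightarrow> real" and betac :: "'b \<Rightarrow> real"
    and D D' :: "real \<Rightarrow> real"
    and Phi Phi' :: "real \<Rightarrow> 'a set"
    and T :: "real \<Rightarrow> 'a \<Rightarrow> 'a"
    and pit mu :: "real \<Rightarrow> 'a measure"
    and f ft :: "real \<Rightarrow> 'a \<Rightarrow> real"
  assumes borel_Theta: "borel_space pi"
    and borel_Y: "borel_space N"
    and prior: "prob_space pi"
    and kernel: "P \<in> measurable pi (subprob_algebra N)"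
    and kernel_prob: "\<And>th. th \<in> space pi \<Longrightarrow> prob_space (P th)"
    and beta_meas: "beta \<in> borel_measurable pi"
    and betac_meas: "betac \<in> borel_measurable N"
    and D_nonneg: "\<And>x. x \<ge> 0 \<Longrightarrow> D x \<ge> 0"
    and D_mono: "\<And>x y. 0 \<le> y \<Longrightarrow> y \<le> x \<Longrightarrow> D y \<le> D x"
    and D_0: "D 0 = 0"
    and D_deriv: "\<And>x. x \<ge> 0 \<Longrightarrow> (D has_real_derivative D' x) (at x within {0..})"
    and Phi_sets: "\<And>t. t \<ge> 0 \<Longrightarrow> Phi t \<in> sets pi"
    and Phi'_sets: "\<And>t. t \<ge> 0 \<Longrightarrow> Phi' t \<in> sets pi"
    and T_meas: "\<And>t. t \<ge> 0 \<Longrightarrow>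
        T t \<in> measurable (restrict_space pi (Phi t)) (restrict_space pi (Phi' t))"
    and pit_sets: "\<And>t. t \<ge> 0 \<Longrightarrow> sets (pit t) = sets (restrict_space pi (Phi t))"
    and pushforward: "\<And>t. t \<ge> 0 \<Longrightarrow>
        distr (pit t) (restrict_space pi (Phi' t)) (T t) = restrict_space pi (Phi' t)"
    and shift: "\<And>t. t \<ge> 0 \<Longrightarrow> AE th in pit t. beta (T t th) \<ge> beta th + t"
    and mu_sets: "\<And>t. t \<ge> 0 \<Longrightarrow> sets (mu t) = sets (restrict_space pi (Phi t))"
    and f_meas: "\<And>t. t \<ge> 0 \<Longrightarrow> f t \<in> borel_measurable (mu t)"
    and ft_meas: "\<And>t. t \<ge> 0 \<Longrightarrow> ft t \<in> borel_measurable (mu t)"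
    and f_nonneg: "\<And>t th. t \<ge> 0 \<Longrightarrow> th \<in> Phi t \<Longrightarrow> f t th \<ge> 0"
    and ft_nonneg: "\<And>t th. t \<ge> 0 \<Longrightarrow> th \<in> Phi t \<Longrightarrow> ft t th \<ge> 0"
    and f_density: "\<And>t. t \<ge> 0 \<Longrightarrow>
        restrict_space pi (Phi t) = density (mu t) (\<lambda>th. ennreal (f t th))"
    and ft_density: "\<And>t. t \<ge> 0 \<Longrightarrow>
        pit t = density (mu t) (\<lambda>th. ennreal (ft t th))"
  defines "E \<equiv> (\<integral>\<^sup>+ th. (\<integral>\<^sup>+ y. ennreal (D \<bar>betac y - beta th\<bar>) \<partial>P th) \<partial>pi)"
    and "Z1 \<equiv> (1/2) * (\<integral>\<^sup>+ t \<in> {0..}. ennreal (D' (t/2)) * valley_fill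
        (\<lambda>t. \<integral>\<^sup>+ th \<in> Phi t. ennreal ((f t th + ft t th) *
              min_err_prob N P th (T t th) (f t th / (f t th + ft t th))) \<partial>mu t)
        t \<partial>lborel)"
    and "Z2 \<equiv> (1/2) * (\<integral>\<^sup>+ t \<in> {0..}. ennreal (D' (t/2)) * valley_fill
        (\<lambda>t. 2 * (\<integral>\<^sup>+ th \<in> Phi t. ennreal (min (f t th) (ft t th) *
              min_err_prob N P th (T t th) (1/2)) \<partial>mu t))
        t \<partial>lborel)"
  shows "E \<ge> Z1 \<and> E \<ge> Z2"
proof -
  interpret pi: prob_space pi by (rule prior)
  note [measurable] = beta_meas betac_meas
  define F where "F t = (\<integral>\<^sup>+th. emeasure (P th) {y \<in> space N. t/2 \<le> \<bar>betac y - beta th\<bar>} \<partial>pi)" for t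
  define a where "a t th = emeasure (P th) {y \<in> space N. beta th + t/2 \<le> betac y}" for t th
  define b where "b t th = emeasure (P th) {y \<in> space N. t/2 < beta th - betac y}" for t th
  have a_m: "(\<lambda>th. a t th) \<in> borel_measurable pi" for t
    unfolding a_def by (rule kernel_pred_meas[OF kernel, of "\<lambda>th y. beta th + t/2 \<le> betac y"]) measurable
  have b_m: "(\<lambda>th. b t th) \<in> borel_measurable pi" for t
    unfolding b_def by (rule kernel_pred_meas[OF kernel, of "\<lambda>th y. t/2 < beta th - betac y"]) measurable
  have sK: "space (P th) = space N" "sets (P th) = sets N" if "th \<in> space pi" for th
    using subprob_measurableD(1,2)[OF kernel that] by auto
  have F_anti: "F t' \<le> F t" if "t \<le> t'" for t t'
    unfolding F_def
  proof (intro nn_integral_mono emeasure_mono)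
    fix th assume th: "th \<in> space pi"
    show "{y \<in> space N. t / 2 \<le> \<bar>betac y - beta th\<bar>} \<in> sets (P th)"
      unfolding sK[OF th] using th by measurable
  qed (use that in auto)
  have key: "(\<integral>\<^sup>+th\<in>Phi t. (ennreal (f t th) * a t th + ennreal (ft t th) * b t (T t th)) \<partial>mu t) \<le> F t"
    if t: "t \<ge> 0" for t
  proof -
    have Phi_t: "Phi t \<in> sets pi" "Phi' t \<in> sets pi" using Phi_sets Phi'_sets t by auto
    have smu: "space (mu t) = Phi t"
      using sets_eq_imp_space_eq[OF mu_sets[OF t]] Phi_t by simp
    have fm: "(\<lambda>th. ennreal (f t th)) \<in> borel_measurable (mu t)" using f_meas[OF t] by measurable
    have ftm: "(\<lambda>th. ennreal (ft t th)) \<in> borel_measurable (mu t)" using ft_meas[OF t] by measurable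
    have am: "(\<lambda>th. a t th) \<in> borel_measurable (mu t)"
      unfolding measurable_cong_sets[OF mu_sets[OF t] refl]
      by (rule measurable_restrict_space1[OF a_m])
    have Tm_mu: "T t \<in> measurable (mu t) (restrict_space pi (Phi' t))"
      unfolding measurable_cong_sets[OF mu_sets[OF t] refl] by (rule T_meas[OF t])
    have Tm_pit: "T t \<in> measurable (pit t) (restrict_space pi (Phi' t))"
      unfolding measurable_cong_sets[OF pit_sets[OF t] refl] by (rule T_meas[OF t])
    have bm': "(\<lambda>th. b t th) \<in> borel_measurable (restrict_space pi (Phi' t))"
      by (rule measurable_restrict_space1[OF b_m])
    have bm: "(\<lambda>th. b t (T t th)) \<in> borel_measurable (mu t)"
      using measurable_comp[OF Tm_mu bm'] by (simp add: o_def)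
    have "(\<integral>\<^sup>+th\<in>Phi t. (ennreal (f t th) * a t th + ennreal (ft t th) * b t (T t th)) \<partial>mu t)
        = (\<integral>\<^sup>+th. (ennreal (f t th) * a t th + ennreal (ft t th) * b t (T t th)) \<partial>mu t)"
      by (rule nn_integral_cong) (simp add: smu)
    also have "\<dots> = (\<integral>\<^sup>+th. ennreal (f t th) * a t th \<partial>mu t) + (\<integral>\<^sup>+th. ennreal (ft t th) * b t (T t th) \<partial>mu t)"
      by (rule nn_integral_add) (use fm ftm am bm in measurable)
    also have "(\<integral>\<^sup>+th. ennreal (f t th) * a t th \<partial>mu t) = (\<integral>\<^sup>+th. a t th * indicator (Phi t) th \<partial>pi)"
    proof -
      have "(\<integral>\<^sup>+th. ennreal (f t th) * a t th \<partial>mu t) = (\<integral>\<^sup>+th. a t th \<partial>density (mu t) (\<lambda>th. ennreal (f t th)))"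
        by (rule nn_integral_density[symmetric, OF fm am])
      also have "\<dots> = (\<integral>\<^sup>+th. a t th \<partial>restrict_space pi (Phi t))"
        by (simp add: f_density[OF t])
      also have "\<dots> = (\<integral>\<^sup>+th. a t th * indicator (Phi t) th \<partial>pi)"
        by (rule nn_integral_restrict_space) (use Phi_t in simp)
      finally show ?thesis .
    qed
    also have "(\<integral>\<^sup>+th. ennreal (ft t th) * b t (T t th) \<partial>mu t) = (\<integral>\<^sup>+th. b t th * indicator (Phi' t) th \<partial>pi)"
    proof -
      have "(\<integral>\<^sup>+th. ennreal (ft t th) * b t (T t th) \<partial>mu t) = (\<integral>\<^sup>+th. b t (T t th) \<partial>pit t)"
        unfolding ft_density[OF t] by (rule nn_integral_density[symmetric, OF ftm bm])
      also have "\<dots> = (\<integral>\<^sup>+th. b t th \<partial>distr (pit t) (restrict_space pi (Phi' t)) (T t))"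
        by (rule nn_integral_distr[symmetric, OF Tm_pit]) (simp add: pushforward[OF t] bm')
      also have "\<dots> = (\<integral>\<^sup>+th. b t th \<partial>restrict_space pi (Phi' t))"
        by (simp add: pushforward[OF t])
      also have "\<dots> = (\<integral>\<^sup>+th. b t th * indicator (Phi' t) th \<partial>pi)"
        by (rule nn_integral_restrict_space) (use Phi_t in simp)
      finally show ?thesis .
    qed
    also have "(\<integral>\<^sup>+th. a t th * indicator (Phi t) th \<partial>pi) + (\<integral>\<^sup>+th. b t th * indicator (Phi' t) th \<partial>pi)
        \<le> (\<integral>\<^sup>+th. a t th \<partial>pi) + (\<integral>\<^sup>+th. b t th \<partial>pi)"
      by (intro add_mono nn_integral_mono) (auto simp: indicator_def)
    also have "\<dots> = (\<integral>\<^sup>+th. a t th + b t th \<partial>pi)"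
      by (rule nn_integral_add[symmetric]) (use a_m b_m in auto)
    also have "\<dots> \<le> F t"
      unfolding F_def
    proof (rule nn_integral_mono)
      fix th assume th: "th \<in> space pi"
      have s1: "{y \<in> space N. beta th + t/2 \<le> betac y} \<in> sets (P th)"
        unfolding sK[OF th] using th by measurable
      have s2: "{y \<in> space N. t/2 < beta th - betac y} \<in> sets (P th)"
        unfolding sK[OF th] using th by measurable
      have s3: "{y \<in> space N. t/2 \<le> \<bar>betac y - beta th\<bar>} \<in> sets (P th)"
        unfolding sK[OF th] using th by measurable
      have "a t th + b t th = emeasure (P th) ({y \<in> space N. beta th + t/2 \<le> betac y} \<union> {y \<in> space N. t/2 < beta th - betac y})"
        unfolding a_def b_def by (rule plus_emeasure[OF s1 s2]) (use t in auto)
      also have "\<dots> \<le> emeasure (P th) {y \<in> space N. t/2 \<le> \<bar>betac y - beta th\<bar>}"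
        by (rule emeasure_mono[OF _ s3]) (auto simp: abs_if)
      finally show "a t th + b t th \<le> emeasure (P th) {y \<in> space N. t/2 \<le> \<bar>betac y - beta th\<bar>}" .
    qed
    finally show ?thesis .
  qed

  have pt: "\<exists>ma mb mb'. min_err_prob N P th (T t th) q \<le> q * ma + (1 - q) * mb' \<and>
      (ft t th = 0 \<or> mb' \<le> mb) \<and> 0 \<le> ma \<and> 0 \<le> mb' \<and>
      a t th = ennreal ma \<and> b t (T t th) = ennreal mb"
    if t: "t \<ge> 0" and th: "th \<in> Phi t" and H: "0 < ennreal (ft t th) \<longrightarrow> beta th + t \<le> beta (T t th)"
      and q: "0 \<le> q" "q \<le> 1" for t th q
  proof -
    have th_sp: "th \<in> space pi" using sets.sets_into_space[OF Phi_sets[OF t]] th by auto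
    have "T t th \<in> space (restrict_space pi (Phi' t))"
      by (rule measurable_space[OF T_meas[OF t]]) (use th th_sp in \<open>simp add: space_restrict_space\<close>)
    then have Tth: "T t th \<in> space pi" by (simp add: space_restrict_space)
    interpret P1: prob_space "P th" by (rule kernel_prob[OF th_sp])
    interpret P2: prob_space "P (T t th)" by (rule kernel_prob[OF Tth])
    define A where "A = {y \<in> space N. beta th + t/2 \<le> betac y}"
    define B where "B = {y \<in> space N. t/2 < beta (T t th) - betac y}"
    have A: "A \<in> sets N" unfolding A_def using th_sp by measurable
    have B: "B \<in> sets N" unfolding B_def using Tth by measurable
    have m: "min_err_prob N P th (T t th) q \<le> q * measure (P th) A + (1 - q) * measure (P (T t th)) (space N - A)"
      by (rule min_err_le[OF A q])
    have c: "ft t th = 0 \<or> measure (P (T t th)) (space N - A) \<le> measure (P (T t th)) B"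
    proof (cases "ft t th = 0")
      case False
      then have "ft t th > 0" using ft_nonneg[OF t th] by auto
      then have sh: "beta th + t \<le> beta (T t th)" using H by auto
      have "space N - A \<subseteq> B" unfolding A_def B_def using sh by auto
      then have "measure (P (T t th)) (space N - A) \<le> measure (P (T t th)) B"
        by (rule P2.finite_measure_mono) (use B sK[OF Tth] in simp)
      then show ?thesis by simp
    qed simp
    show ?thesis
    proof (intro exI conjI)
      show "a t th = ennreal (measure (P th) A)"
        unfolding a_def A_def by (rule P1.emeasure_eq_measure)
      show "b t (T t th) = ennreal (measure (P (T t th)) B)"
        unfolding b_def B_def by (rule P2.emeasure_eq_measure)
    qed (use m c in auto)
  qed
  have gle: "(\<integral>\<^sup>+ th \<in> Phi t. ennreal ((f t th + ft t th) *
              min_err_prob N P th (T t th) (f t th / (f t th + ft t th))) \<partial>mu t) \<le> F t \<and>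
     2 * (\<integral>\<^sup>+ th \<in> Phi t. ennreal (min (f t th) (ft t th) *
              min_err_prob N P th (T t th) (1/2)) \<partial>mu t) \<le> F t" if t: "t \<ge> 0" for t
  proof -
    have Phi_t: "Phi t \<in> sets pi" using Phi_sets t by auto
    have smu: "space (mu t) = Phi t"
      using sets_eq_imp_space_eq[OF mu_sets[OF t]] Phi_t by simp
    have AE1: "AE th in mu t. 0 < ennreal (ft t th) \<longrightarrow> beta th + t \<le> beta (T t th)"
      using shift[OF t] unfolding ft_density[OF t]
      by (subst (asm) AE_density) (use ft_meas[OF t] in measurable)
    let ?X = "\<lambda>th. ennreal (f t th) * a t th + ennreal (ft t th) * b t (T t th)"
    have X_m: "?X \<in> borel_measurable (mu t)"
    proof -
      have Phi'_t: "Phi' t \<in> sets pi" using Phi'_sets t by auto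
      have fm: "(\<lambda>th. ennreal (f t th)) \<in> borel_measurable (mu t)" using f_meas[OF t] by measurable
      have ftm: "(\<lambda>th. ennreal (ft t th)) \<in> borel_measurable (mu t)" using ft_meas[OF t] by measurable
      have am: "(\<lambda>th. a t th) \<in> borel_measurable (mu t)"
        unfolding measurable_cong_sets[OF mu_sets[OF t] refl]
        by (rule measurable_restrict_space1[OF a_m])
      have Tm_mu: "T t \<in> measurable (mu t) (restrict_space pi (Phi' t))"
        unfolding measurable_cong_sets[OF mu_sets[OF t] refl] by (rule T_meas[OF t])
      have bm': "(\<lambda>th. b t th) \<in> borel_measurable (restrict_space pi (Phi' t))"
        by (rule measurable_restrict_space1[OF b_m])
      have bm: "(\<lambda>th. b t (T t th)) \<in> borel_measurable (mu t)"
        using measurable_comp[OF Tm_mu bm'] by (simp add: o_def)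
      show ?thesis using fm ftm am bm by measurable
    qed
    have K: "(\<integral>\<^sup>+th. ?X th \<partial>mu t) \<le> F t"
    proof -
      have "(\<integral>\<^sup>+th. ?X th \<partial>mu t) = (\<integral>\<^sup>+th\<in>Phi t. ?X th \<partial>mu t)"
        by (rule nn_integral_cong) (simp add: smu)
      also have "\<dots> \<le> F t" by (rule key[OF t])
      finally show ?thesis .
    qed
    have 1: "(\<integral>\<^sup>+ th \<in> Phi t. ennreal ((f t th + ft t th) *
              min_err_prob N P th (T t th) (f t th / (f t th + ft t th))) \<partial>mu t) \<le> (\<integral>\<^sup>+th. ?X th \<partial>mu t)"
    proof (rule nn_integral_mono_AE)
      show "AE th in mu t. ennreal ((f t th + ft t th) *
              min_err_prob N P th (T t th) (f t th / (f t th + ft t th))) * indicator (Phi t) th \<le> ?X th"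
        using AE1
      proof (rule eventually_mono)
        fix th assume H: "0 < ennreal (ft t th) \<longrightarrow> beta th + t \<le> beta (T t th)"
        show "ennreal ((f t th + ft t th) *
              min_err_prob N P th (T t th) (f t th / (f t th + ft t th))) * indicator (Phi t) th \<le> ?X th"
        proof (cases "th \<in> Phi t")
          case True
          have f0: "0 \<le> f t th" "0 \<le> ft t th" using f_nonneg ft_nonneg t True by auto
          have q: "0 \<le> f t th / (f t th + ft t th)" "f t th / (f t th + ft t th) \<le> 1"
            using f0 by (auto simp: divide_le_eq)
          obtain ma mb mb' where o: "min_err_prob N P th (T t th) (f t th / (f t th + ft t th))
              \<le> (f t th / (f t th + ft t th)) * ma + (1 - (f t th / (f t th + ft t th))) * mb'"
            "ft t th = 0 \<or> mb' \<le> mb" "0 \<le> ma" "0 \<le> mb'" "a t th = ennreal ma" "b t (T t th) = ennreal mb"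
            using pt[OF t True H q] by blast
          have mb: "0 \<le> mb \<or> ft t th = 0" using o by auto
          have r: "(f t th + ft t th) * min_err_prob N P th (T t th) (f t th / (f t th + ft t th))
              \<le> f t th * ma + ft t th * mb"
            by (rule pw1[OF f0 o(1) refl o(2) o(3) o(4)])
          have "ennreal ((f t th + ft t th) * min_err_prob N P th (T t th) (f t th / (f t th + ft t th)))
              \<le> ennreal (f t th * ma + ft t th * mb)" by (rule ennreal_leI[OF r])
          also have "\<dots> = ?X th"
            using mb
          proof
            assume "0 \<le> mb" then show ?thesis using o(3,5,6) f0 by (simp add: ennreal_plus ennreal_mult)
          next
            assume "ft t th = 0" then show ?thesis using o(3,5,6) f0 by (simp add: ennreal_mult)
          qed
          finally show ?thesis using True by simp
        qed simp
      qed
    qed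
    have 2: "(\<integral>\<^sup>+ th \<in> Phi t. ennreal (min (f t th) (ft t th) *
              min_err_prob N P th (T t th) (1/2)) \<partial>mu t) \<le> (\<integral>\<^sup>+th. (1/2) * ?X th \<partial>mu t)"
    proof (rule nn_integral_mono_AE)
      show "AE th in mu t. ennreal (min (f t th) (ft t th) *
              min_err_prob N P th (T t th) (1/2)) * indicator (Phi t) th \<le> (1/2) * ?X th"
        using AE1
      proof (rule eventually_mono)
        fix th assume H: "0 < ennreal (ft t th) \<longrightarrow> beta th + t \<le> beta (T t th)"
        show "ennreal (min (f t th) (ft t th) *
              min_err_prob N P th (T t th) (1/2)) * indicator (Phi t) th \<le> (1/2) * ?X th"
        proof (cases "th \<in> Phi t")
          case True
          have f0: "0 \<le> f t th" "0 \<le> ft t th" using f_nonneg ft_nonneg t True by auto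
          obtain ma mb mb' where o: "min_err_prob N P th (T t th) (1/2)
              \<le> 1/2 * ma + (1 - 1/2) * mb'"
            "ft t th = 0 \<or> mb' \<le> mb" "0 \<le> ma" "0 \<le> mb'" "a t th = ennreal ma" "b t (T t th) = ennreal mb"
            using pt[OF t True H, of "1/2"] by auto
          have mb: "0 \<le> mb \<or> ft t th = 0" using o by auto
          have r: "min (f t th) (ft t th) * min_err_prob N P th (T t th) (1/2)
              \<le> 1/2 * (f t th * ma + ft t th * mb)"
            by (rule pw2[OF f0 o(1) o(2) o(3) o(4)])
          have "ennreal (min (f t th) (ft t th) * min_err_prob N P th (T t th) (1/2))
              \<le> ennreal (1/2 * (f t th * ma + ft t th * mb))" by (rule ennreal_leI[OF r])
          also have "\<dots> = ennreal (1/2) * ennreal (f t th * ma + ft t th * mb)"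
            by (rule ennreal_mult') simp
          also have "\<dots> = (1/2) * ?X th"
          proof -
            have h: "ennreal (1/2) = (1/2::ennreal)"
              by (metis divide_ennreal ennreal_1 ennreal_numeral zero_le_one zero_less_numeral)
            have "ennreal (f t th * ma + ft t th * mb) = ?X th"
              using mb
            proof
              assume "0 \<le> mb" then show ?thesis using o(3,5,6) f0 by (simp add: ennreal_plus ennreal_mult)
            next
              assume "ft t th = 0" then show ?thesis using o(3,5,6) f0 by (simp add: ennreal_mult)
            qed
            then show ?thesis using h by simp
          qed
          finally show ?thesis using True by simp
        qed simp
      qed
    qed
    have "(\<integral>\<^sup>+th. (1/2) * ?X th \<partial>mu t) = (1/2) * (\<integral>\<^sup>+th. ?X th \<partial>mu t)"
      by (rule nn_integral_cmult[OF X_m])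
    then have "2 * (\<integral>\<^sup>+ th \<in> Phi t. ennreal (min (f t th) (ft t th) *
              min_err_prob N P th (T t th) (1/2)) \<partial>mu t) \<le> 2 * ((1/2) * (\<integral>\<^sup>+th. ?X th \<partial>mu t))"
      using 2 by (simp add: mult_left_mono)
    also have "\<dots> = (\<integral>\<^sup>+th. ?X th \<partial>mu t)"
      by (rule half2)
    finally show ?thesis using 1 K by (meson order_trans)
  qed
  define g1 where "g1 = (\<lambda>t. \<integral>\<^sup>+ th \<in> Phi t. ennreal ((f t th + ft t th) *
              min_err_prob N P th (T t th) (f t th / (f t th + ft t th))) \<partial>mu t)"
  define g2 where "g2 = (\<lambda>t. 2 * (\<integral>\<^sup>+ th \<in> Phi t. ennreal (min (f t th) (ft t th) *
              min_err_prob N P th (T t th) (1/2)) \<partial>mu t))"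
  have C: "(1/2) * (\<integral>\<^sup>+t\<in>{0..}. ennreal (D' (t/2)) * F t \<partial>lborel) \<le> E"
    unfolding F_def E_def
    by (rule stepC[OF prior kernel kernel_prob beta_meas betac_meas D_mono D_0 D_deriv])
  have VF: "(1/2) * (\<integral>\<^sup>+t\<in>{0..}. ennreal (D' (t/2)) * valley_fill g t \<partial>lborel) \<le> E"
    if gF: "\<And>t. t \<ge> 0 \<Longrightarrow> g t \<le> F t" for g
  proof -
    have "(1/2) * (\<integral>\<^sup>+t\<in>{0..}. ennreal (D' (t/2)) * valley_fill g t \<partial>lborel)
        \<le> (1/2) * (\<integral>\<^sup>+t\<in>{0..}. ennreal (D' (t/2)) * F t \<partial>lborel)"
    proof (intro mult_left_mono nn_integral_mono)
      fix t
      show "ennreal (D' (t/2)) * valley_fill g t * indicator {0..} t \<le> ennreal (D' (t/2)) * F t * indicator {0..} t"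
      proof (cases "t \<ge> 0")
        case True
        have "valley_fill g t \<le> F t" unfolding valley_fill_def
        proof (rule SUP_least)
          fix t' assume "t' \<in> {t..}"
          then show "g t' \<le> F t" using gF[of t'] F_anti[of t t'] True by auto
        qed
        then show ?thesis using True by (intro mult_right_mono mult_left_mono) auto
      qed simp
    qed simp
    also have "\<dots> \<le> E" by (rule C)
    finally show ?thesis .
  qed
  have "Z1 \<le> E" unfolding Z1_def g1_def[symmetric]
    by (rule VF) (use gle in \<open>simp add: g1_def\<close>)
  moreover have "Z2 \<le> E" unfolding Z2_def g2_def[symmetric]
    by (rule VF) (use gle in \<open>simp add: g2_def\<close>)
  ultimately show ?thesis by simp
qed

end
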